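(* Let $M$ be a finitely generated monoid and let $G$ be a finite group. Then the direct product $M\times G$ is quasi-isometric to $M$.
   Context: For a monoid $S$ generated by a finite set $A$, $d_A(x,y)=\inf\{|w|:w\in A^*,\ xw=y\}$ ($A^*$ the free monoid on $A$, $\inf\emptyset=\infty$). A map $f:(S,d_A)\to(T,d_B)$ is a quasi-isometry if there are $1\le\lambda<\infty$, $0<\epsilon<\infty$, $0\le\mu<\infty$ with $\frac1\lambda d_A(x,y)-\epsilon\le d_B(f(x),f(y))\le\lambda d_A(x,y)+\epsilon$ for all $x,y$, and for each $t\in T$ some $x\in S$ with $\max(d_B(t,f(x)),d_B(f(x),t))\le\mu$. Finitely generated monoids $S,T$ are quasi-isometric if $(S,d_A)$ and $(T,d_B)$ are quasi-isometric for some finite generating sets $A,B$. *)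

theory Defs
  imports "HOL-Algebra.Group" "HOL-Library.Extended_Real"
begin

definition word_eval :: "('a, 'm) monoid_scheme \<Rightarrow> 'a list \<Rightarrow> 'a" where
  "word_eval S w = foldr (\<lambda>a b. a \<otimes>\<^bsub>S\<^esub> b) w \<one>\<^bsub>S\<^esub>"

definition fin_gen_set :: "('a, 'm) monoid_scheme \<Rightarrow> 'a set \<Rightarrow> bool" where
  "fin_gen_set S A \<longleftrightarrow> finite A \<and> A \<subseteq> carrier S \<and>
     carrier S = {word_eval S w | w. w \<in> lists A}"

definition fin_gen_monoid :: "('a, 'm) monoid_scheme \<Rightarrow> bool" where
  "fin_gen_monoid S \<longleftrightarrow> monoid S \<and> (\<exists>A. fin_gen_set S A)"

text \<open>Directed word distance d_A(x,y) = inf{|w| : w in A*, x w = y}, with inf {} = \<infinity>.\<close>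
definition word_dist :: "('a, 'm) monoid_scheme \<Rightarrow> 'a set \<Rightarrow> 'a \<Rightarrow> 'a \<Rightarrow> ereal" where
  "word_dist S A x y = Inf {ereal (real (length w)) | w. w \<in> lists A \<and> x \<otimes>\<^bsub>S\<^esub> word_eval S w = y}"

definition quasi_isometry ::
  "('a, 'm) monoid_scheme \<Rightarrow> 'a set \<Rightarrow> ('b, 'n) monoid_scheme \<Rightarrow> 'b set \<Rightarrow> ('a \<Rightarrow> 'b) \<Rightarrow> bool" where
  "quasi_isometry S A T B f \<longleftrightarrow> f \<in> carrier S \<rightarrow> carrier T \<and>
     (\<exists>lam eps mu :: real. 1 \<le> lam \<and> 0 < eps \<and> 0 \<le> mu \<and>
        (\<forall>x\<in>carrier S. \<forall>y\<in>carrier S.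
           ereal (1 / lam) * word_dist S A x y - ereal eps \<le> word_dist T B (f x) (f y) \<and>
           word_dist T B (f x) (f y) \<le> ereal lam * word_dist S A x y + ereal eps) \<and>
        (\<forall>t\<in>carrier T. \<exists>x\<in>carrier S.
           max (word_dist T B t (f x)) (word_dist T B (f x) t) \<le> ereal mu))"

definition quasi_isometric :: "('a, 'm) monoid_scheme \<Rightarrow> ('b, 'n) monoid_scheme \<Rightarrow> bool" where
  "quasi_isometric S T \<longleftrightarrow>
     (\<exists>A B f. fin_gen_set S A \<and> fin_gen_set T B \<and> quasi_isometry S A T B f)"

end

theory Submission
  imports Defs
begin

lemma word_eval_Nil[simp]: "word_eval S [] = \<one>\<^bsub>S\<^esub>"
  by (simp add: word_eval_def)

lemma word_eval_Cons[simp]: "word_eval S (a # w) = a \<otimes>\<^bsub>S\<^esub> word_eval S w"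
  by (simp add: word_eval_def)

lemma (in monoid) word_eval_in: "set w \<subseteq> carrier G \<Longrightarrow> word_eval G w \<in> carrier G"
  by (induction w) auto

lemma (in monoid) word_eval_append:
  "set u \<subseteq> carrier G \<Longrightarrow> set v \<subseteq> carrier G \<Longrightarrow>
   word_eval G (u @ v) = word_eval G u \<otimes> word_eval G v"
  by (induction u) (auto simp: m_assoc word_eval_in)

lemma (in monoid) word_eval_filter:
  "set w \<subseteq> carrier G \<Longrightarrow> word_eval G (filter (\<lambda>a. a \<noteq> \<one>) w) = word_eval G w"
  by (induction w) (auto simp: word_eval_in)

lemma word_eval_DirProd:
  "word_eval (M \<times>\<times> H) w = (word_eval M (map fst w), word_eval H (map snd w))"
  by (induction w) (auto simp: mult_DirProd')

lemma word_dist_le: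
  "w \<in> lists A \<Longrightarrow> x \<otimes>\<^bsub>S\<^esub> word_eval S w = y \<Longrightarrow> word_dist S A x y \<le> ereal (real (length w))"
  unfolding word_dist_def by (rule Inf_lower) blast

lemma word_dist_transfer:
  assumes "\<And>w. w \<in> lists A \<Longrightarrow> x \<otimes>\<^bsub>S\<^esub> word_eval S w = y \<Longrightarrow> d \<le> ereal (real (length w)) + ereal c"
  shows "d \<le> word_dist S A x y + ereal c"
proof -
  have "d - ereal c \<le> word_dist S A x y"
    unfolding word_dist_def
  proof (rule Inf_greatest)
    fix z assume "z \<in> {ereal (real (length w)) | w. w \<in> lists A \<and> x \<otimes>\<^bsub>S\<^esub> word_eval S w = y}"
    then obtain w where w: "w \<in> lists A" "x \<otimes>\<^bsub>S\<^esub> word_eval S w = y" "z = ereal (real (length w))" by blast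
    have "d \<le> z + ereal c" using assms[OF w(1,2)] w(3) by simp
    then show "d - ereal c \<le> z" by (simp add: ereal_minus_le_iff)
  qed
  then show ?thesis by (simp add: ereal_minus_le_iff add.commute)
qed

theorem corollary8p4:
  fixes M :: "('a, 'm) monoid_scheme" and G :: "('b, 'n) monoid_scheme"
  assumes "fin_gen_monoid M"
    and "group G" and "finite (carrier G)"
  shows "quasi_isometric (M \<times>\<times> G) M"
proof -
  interpret M: monoid M using assms(1) by (simp add: fin_gen_monoid_def)
  interpret G: group G by (rule assms(2))
  interpret P: monoid "M \<times>\<times> G" by (rule DirProd_monoid) (unfold_locales)
  obtain A where A: "fin_gen_set M A" using assms(1) by (auto simp: fin_gen_monoid_def)
  have Afin: "finite A" and Asub: "A \<subseteq> carrier M"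
    and Agen: "carrier M = {word_eval M w | w. w \<in> lists A}"
    using A by (auto simp: fin_gen_set_def)
  define B where "B = (\<lambda>a. (a, \<one>\<^bsub>G\<^esub>)) ` A \<union> (\<lambda>g. (\<one>\<^bsub>M\<^esub>, g)) ` carrier G"
  have Bsub: "B \<subseteq> carrier (M \<times>\<times> G)" using Asub by (auto simp: B_def)
  have rep1: "word_eval G (map (\<lambda>a. \<one>\<^bsub>G\<^esub>) w) = \<one>\<^bsub>G\<^esub>" for w :: "'a list"
    by (induction w) auto
  have embed: "word_eval (M \<times>\<times> G) (map (\<lambda>a. (a, \<one>\<^bsub>G\<^esub>)) w @ [(\<one>\<^bsub>M\<^esub>, g)]) = (word_eval M w, g)"
    if "w \<in> lists A" "g \<in> carrier G" for w g
  proof -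
    have sw: "set w \<subseteq> carrier M" using that Asub by auto
    have "map fst (map (\<lambda>a. (a, \<one>\<^bsub>G\<^esub>)) w @ [(\<one>\<^bsub>M\<^esub>, g)]) = w @ [\<one>\<^bsub>M\<^esub>]" by (induction w) auto
    moreover have "map snd (map (\<lambda>a. (a, \<one>\<^bsub>G\<^esub>)) w @ [(\<one>\<^bsub>M\<^esub>, g)]) = map (\<lambda>a. \<one>\<^bsub>G\<^esub>) w @ [g]" by (induction w) auto
    moreover have "word_eval M (w @ [\<one>\<^bsub>M\<^esub>]) = word_eval M w"
      using sw by (simp add: M.word_eval_append M.word_eval_in)
    moreover have "word_eval G (map (\<lambda>a. \<one>\<^bsub>G\<^esub>) w @ [g]) = g"
      using that by (subst G.word_eval_append) (auto simp: rep1)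
    ultimately show ?thesis by (simp add: word_eval_DirProd comp_def del: map_map)
  qed
  have embB: "map (\<lambda>a. (a, \<one>\<^bsub>G\<^esub>)) w @ [(\<one>\<^bsub>M\<^esub>, g)] \<in> lists B"
    if "w \<in> lists A" "g \<in> carrier G" for w g
    using that by (auto simp: B_def)
  have genB: "fin_gen_set (M \<times>\<times> G) B"
    unfolding fin_gen_set_def
  proof (intro conjI)
    show "finite B" using Afin assms(3) by (simp add: B_def)
    show "B \<subseteq> carrier (M \<times>\<times> G)" by (rule Bsub)
    show "carrier (M \<times>\<times> G) = {word_eval (M \<times>\<times> G) w | w. w \<in> lists B}"
    proof
      show "carrier (M \<times>\<times> G) \<subseteq> {word_eval (M \<times>\<times> G) w | w. w \<in> lists B}"
      proof
        fix p assume "p \<in> carrier (M \<times>\<times> G)"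
        then obtain m g where p: "p = (m, g)" "m \<in> carrier M" "g \<in> carrier G" by auto
        then obtain w where w: "w \<in> lists A" "m = word_eval M w" using Agen by auto
        show "p \<in> {word_eval (M \<times>\<times> G) w | w. w \<in> lists B}"
          unfolding mem_Collect_eq
          by (rule exI[of _ "map (\<lambda>a. (a, \<one>\<^bsub>G\<^esub>)) w @ [(\<one>\<^bsub>M\<^esub>, g)]"])
             (use embed[OF w(1) p(3)] embB[OF w(1) p(3)] p w in auto)
      qed
      show "{word_eval (M \<times>\<times> G) w | w. w \<in> lists B} \<subseteq> carrier (M \<times>\<times> G)"
        using Bsub P.word_eval_in by blast
    qed
  qed
  have d1: "word_dist (M \<times>\<times> G) B p q \<le> word_dist M A (fst p) (fst q) + ereal 1"
    if "p \<in> carrier (M \<times>\<times> G)" "q \<in> carrier (M \<times>\<times> G)" for p q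
  proof (rule word_dist_transfer)
    fix w assume w: "w \<in> lists A" "fst p \<otimes>\<^bsub>M\<^esub> word_eval M w = fst q"
    define g where "g = inv\<^bsub>G\<^esub> snd p \<otimes>\<^bsub>G\<^esub> snd q"
    have gc: "g \<in> carrier G" using that by (auto simp: g_def)
    have "p \<otimes>\<^bsub>M \<times>\<times> G\<^esub> word_eval (M \<times>\<times> G) (map (\<lambda>a. (a, \<one>\<^bsub>G\<^esub>)) w @ [(\<one>\<^bsub>M\<^esub>, g)]) = q"
    proof -
      have "snd p \<otimes>\<^bsub>G\<^esub> g = snd q" using that by (auto simp: g_def G.m_assoc[symmetric])
      then show ?thesis unfolding embed[OF w(1) gc] using w(2) by (cases p, cases q) auto
    qed
    then have "word_dist (M \<times>\<times> G) B p q \<le> ereal (real (length (map (\<lambda>a. (a, \<one>\<^bsub>G\<^esub>)) w @ [(\<one>\<^bsub>M\<^esub>, g)])))"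
      by (intro word_dist_le embB w(1) gc)
    then show "word_dist (M \<times>\<times> G) B p q \<le> ereal (real (length w)) + ereal 1" by (simp add: add.commute)
  qed
  have d2: "word_dist M A (fst p) (fst q) \<le> word_dist (M \<times>\<times> G) B p q + ereal 0"
    if "p \<in> carrier (M \<times>\<times> G)" "q \<in> carrier (M \<times>\<times> G)" for p q
  proof (rule word_dist_transfer)
    fix w assume w: "w \<in> lists B" "p \<otimes>\<^bsub>M \<times>\<times> G\<^esub> word_eval (M \<times>\<times> G) w = q"
    have sfst: "set (map fst w) \<subseteq> A \<union> {\<one>\<^bsub>M\<^esub>}" using w(1) by (auto simp: B_def)
    then have sfstc: "set (map fst w) \<subseteq> carrier M" using Asub by auto
    define v where "v = filter (\<lambda>a. a \<noteq> \<one>\<^bsub>M\<^esub>) (map fst w)"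
    have "v \<in> lists A" using sfst by (force simp: v_def)
    moreover have "fst p \<otimes>\<^bsub>M\<^esub> word_eval M v = fst q"
      using w(2) sfstc by (auto simp: v_def M.word_eval_filter word_eval_DirProd mult_DirProd')
    ultimately have "word_dist M A (fst p) (fst q) \<le> ereal (real (length v))" by (rule word_dist_le)
    also have "\<dots> \<le> ereal (real (length w))" by (simp add: v_def order_trans[OF length_filter_le])
    finally show "word_dist M A (fst p) (fst q) \<le> ereal (real (length w)) + ereal 0" by simp
  qed
  have zero: "word_dist M A t t \<le> ereal 0" if "t \<in> carrier M" for t
    using word_dist_le[of "[]" A M t t] that by simp
  have P1: "fst \<in> carrier (M \<times>\<times> G) \<rightarrow> carrier M" by auto
  have P2: "\<forall>x\<in>carrier (M \<times>\<times> G). \<forall>y\<in>carrier (M \<times>\<times> G).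
        ereal (1 / 1) * word_dist (M \<times>\<times> G) B x y - ereal 1 \<le> word_dist M A (fst x) (fst y) \<and>
        word_dist M A (fst x) (fst y) \<le> ereal 1 * word_dist (M \<times>\<times> G) B x y + ereal 1"
  proof (intro ballI conjI)
    fix x y assume xy: "x \<in> carrier (M \<times>\<times> G)" "y \<in> carrier (M \<times>\<times> G)"
    show "ereal (1 / 1) * word_dist (M \<times>\<times> G) B x y - ereal 1 \<le> word_dist M A (fst x) (fst y)"
      using d1[OF xy] by (simp add: ereal_minus_le_iff add.commute)
    have "word_dist M A (fst x) (fst y) \<le> word_dist (M \<times>\<times> G) B x y" using d2[OF xy] by simp
    also have "\<dots> \<le> word_dist (M \<times>\<times> G) B x y + ereal 1"
      by (cases "word_dist (M \<times>\<times> G) B x y") auto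
    finally show "word_dist M A (fst x) (fst y) \<le> ereal 1 * word_dist (M \<times>\<times> G) B x y + ereal 1" by simp
  qed
  have P3: "\<forall>t\<in>carrier M. \<exists>x\<in>carrier (M \<times>\<times> G). max (word_dist M A t (fst x)) (word_dist M A (fst x) t) \<le> ereal 0"
  proof
    fix t assume t: "t \<in> carrier M"
    show "\<exists>x\<in>carrier (M \<times>\<times> G). max (word_dist M A t (fst x)) (word_dist M A (fst x) t) \<le> ereal 0"
      by (rule bexI[of _ "(t, \<one>\<^bsub>G\<^esub>)"]) (use t zero in auto)
  qed
  have "quasi_isometry (M \<times>\<times> G) B M A fst"
    unfolding quasi_isometry_def
    apply (rule conjI, rule P1)
    apply (rule exI[of _ 1], rule exI[of _ 1], rule exI[of _ 0])
    using P2 P3 by simp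
  then show ?thesis unfolding quasi_isometric_def using genB A by blast
qed

end
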